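(* Let $L\geq 1$ be an integer and define, for $\beta\in(0,1)$, $$f(\beta)=\frac{(1-\beta^{2L})^2}{L^2\beta^{2L}(1-\beta^2)}.$$ Then $f$ is strictly decreasing on $(0,1)$.
   Context: $L$ is the number of users of a broadcast channel; $f(\beta)$ is the limit $\lim_{N\to\infty}\|\mathbf{F}\|_F^2/N$ of the normalized squared Frobenius norm of the base encoding matrix of the scheme, but the claim is purely about the displayed real function. *)

theory Defs
  imports Complex_Main
begin

definition f_beta :: "nat \<Rightarrow> real \<Rightarrow> real" where
  "f_beta L \<beta> = (1 - \<beta> ^ (2*L))^2 / ((real L)^2 * \<beta> ^ (2*L) * (1 - \<beta>^2))"

end

theory Submission
  imports Defs
begin

lemma key:
  fixes t :: real and L :: nat
  assumes t: "0 < t" "t < 1"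
  shows "(1 - t ^ L)^2 / (t ^ L * (1 - t)) = (\<Sum>k<L. (1 / t ^ (L - k) - t ^ k))"
proof -
  have gp: "(1 - t ^ L) / (1 - t) = (\<Sum>k<L. t ^ k)"
    using t by (simp add: sum_gp_strict)
  have tk: "t ^ k / t ^ L = 1 / t ^ (L - k)" if "k < L" for k
  proof -
    have "t ^ L = t ^ k * t ^ (L - k)" using that by (simp add: power_add[symmetric])
    thus ?thesis using t by simp
  qed
  have "(\<Sum>k<L. (1 / t ^ (L - k) - t ^ k)) = (\<Sum>k<L. t ^ k * ((1 - t ^ L) / t ^ L))"
    apply (rule sum.cong, simp)
    using t tk by (simp add: field_simps)
  also have "\<dots> = (1 - t ^ L) / (1 - t) * ((1 - t ^ L) / t ^ L)"
    by (simp only: gp[symmetric] sum_distrib_right[symmetric])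
  also have "\<dots> = (1 - t ^ L)^2 / (t ^ L * (1 - t))"
    by (simp add: power2_eq_square)
  finally show ?thesis by simp
qed

lemma fb:
  assumes "0 < x" "x < 1"
  shows "f_beta L x = (\<Sum>k<L. (1 / (x^2) ^ (L - k) - (x^2) ^ k)) / (real L)^2"
proof -
  have "x^2 < 1" using assms by (simp add: power_less_one_iff)
  hence "(1 - (x^2) ^ L)^2 / ((x^2) ^ L * (1 - x^2)) = (\<Sum>k<L. (1 / (x^2) ^ (L - k) - (x^2) ^ k))"
    using assms by (intro key) auto
  moreover have "f_beta L x = ((1 - (x^2) ^ L)^2 / ((x^2) ^ L * (1 - x^2))) / (real L)^2"
    unfolding f_beta_def power_mult[symmetric] by (simp add: divide_divide_eq_left mult.commute mult.left_commute)
  ultimately show ?thesis by simp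
qed

theorem lemma1:
  fixes L :: nat
  assumes "L \<ge> 1"
  shows "\<forall>x\<in>{0<..<1::real}. \<forall>y\<in>{0<..<1::real}. x < y \<longrightarrow> f_beta L y < f_beta L x"
proof (intro ballI impI)
  fix x y :: real
  assume x: "x \<in> {0<..<1}" and y: "y \<in> {0<..<1}" and xy: "x < y"
  have a: "0 < x^2" "x^2 < y^2" using x y xy by (auto intro: power_strict_mono)
  have "(\<Sum>k<L. (1 / (y^2) ^ (L - k) - (y^2) ^ k)) < (\<Sum>k<L. (1 / (x^2) ^ (L - k) - (x^2) ^ k))"
  proof (rule sum_strict_mono)
    have "0 \<in> {..<L}" using assms by simp
    thus "{..<L} \<noteq> {}" by blast
  next
    fix k assume k: "k \<in> {..<L}"
    have "(y^2)^(L-k) > (x^2)^(L-k)" using a k power_strict_mono[of "x^2" "y^2" "L-k"] by auto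
    hence 1: "1 / (y^2) ^ (L - k) < 1 / (x^2) ^ (L - k)" using a y by (intro divide_strict_left_mono) (auto intro!: mult_pos_pos)
    have "(x^2)^k \<le> (y^2)^k" using a power_mono[of "x^2" "y^2" k] by auto
    with 1 show "1 / (y^2) ^ (L - k) - (y^2) ^ k < 1 / (x^2) ^ (L - k) - (x^2) ^ k" by linarith
  qed simp
  moreover have "(real L)^2 > 0" using assms by simp
  ultimately show "f_beta L y < f_beta L x" using x y
    by (simp add: fb divide_strict_right_mono)
qed

end
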